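(* Let $A\in\mathrm{GL}(\mathcal S)$, let $\varepsilon_A\in\mathrm{Inv}(\mathcal S)$ be the unique element with $\varepsilon_A\circ A(\Delta_0)=\Delta_0$, and let $\sigma\in S_6$ be the permutation with $\varepsilon_A\circ A(\mathfrak p_i)=\mathfrak p_{\sigma(i)}$ for $i=1,\dots,6$. Then for every $1\le i\le6$, $$A\circ\varepsilon^{(i)}=\varepsilon^{(\sigma(i))}\circ A .$$
   Context: Work over an algebraically closed field of characteristic $\neq2$. $F(X)=\sum_{i=0}^6f_iX^i$, $f_6\neq0$, distinct roots $\theta_1,\dots,\theta_6$. $P_j(X)=\prod_{i\ne j}(X-\theta_i)$, $\omega_j=P_j(\theta_j)$. Points of $\mathbb P^5$ are identified with $P(X)=\sum_{j=0}^5p_jX^j$; $\pi_j=P(\theta_j)/\omega_j$. $\mathcal S\subset\mathbb P^5$ is defined by $\sum_j\theta_j^i\omega_j\pi_j^2=0$, $i=0,1,2$. $\varepsilon^{(i)}$ is the involution $\pi_j\mapsto(-1)^{\delta_{ij}}\pi_j$; $\mathrm{Inv}(\mathcal S)$ is the commutative group of order 32 generated by them. $\Delta_0=\{(p_0:p_1:0:0:0:0)\}$, $\Delta_i=\varepsilon^{(i)}(\Delta_0)$, $\Delta_{ij}=\varepsilon^{(i)}\varepsilon^{(j)}(\Delta_0)$, $\Delta_{ijk}=\varepsilon^{(i)}\varepsilon^{(j)}\varepsilon^{(k)}(\Delta_0)$; these 32 lines are all the lines on $\mathcal S$, and $\mathrm{Inv}(\mathcal S)$ permutes them simply transitively. $\mathfrak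 p_i=\Delta_0\cap\Delta_i=(-\theta_i:1:0:0:0:0)$; these are the only points of $\Delta_0$ lying on another line of $\mathcal S$. $\mathrm{GL}(\mathcal S)$ is the group of automorphisms of $\mathcal S$ which are restrictions of projective linear transformations of $\mathbb P^5$. *)

theory Defs
  imports "HOL-Computational_Algebra.Polynomial" "HOL-Combinatorics.Permutations"
begin

text \<open>Points of P^5 are represented by nonzero polynomials P of degree at most 5
  (P(X) = sum p_j X^j), up to nonzero scalar multiples. The roots of F are
  theta 1, ..., theta 6.\<close>

definition V5 :: "'a::field poly set" where
  "V5 = {P. degree P \<le> 5}"

definition Delta0 :: "'a::field poly set" where
  "Delta0 = {P. degree P \<le> 1}"  \<comment> \<open>linear span of the line (p0:p1:0:0:0:0)\<close>

definition Pj :: "(nat \<Rightarrow> 'a::field) \<Rightarrow> nat \<Rightarrow> 'a poly" where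
  "Pj \<theta> j = (\<Prod>i\<in>{1..6} - {j}. [:- \<theta> i, 1:])"

definition omega :: "(nat \<Rightarrow> 'a::field) \<Rightarrow> nat \<Rightarrow> 'a" where
  "omega \<theta> j = poly (Pj \<theta> j) (\<theta> j)"

definition piC :: "(nat \<Rightarrow> 'a::field) \<Rightarrow> 'a poly \<Rightarrow> nat \<Rightarrow> 'a" where
  "piC \<theta> P j = poly P (\<theta> j) / omega \<theta> j"

definition Scone :: "(nat \<Rightarrow> 'a::field) \<Rightarrow> 'a poly set" where
  "Scone \<theta> = {P. P \<noteq> 0 \<and> degree P \<le> 5 \<and>
     (\<forall>k<3. (\<Sum>j\<in>{1..6}. \<theta> j ^ k * omega \<theta> j * (piC \<theta> P j)^2) = 0)}"

text \<open>The involution of Inv(S) flipping the signs of the coordinates pi_i, i in I.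
  Since P = sum_j pi_j P_j (Lagrange interpolation), it is
  P - 2 sum_{i in I} pi_i P_i.\<close>
definition epsI :: "(nat \<Rightarrow> 'a::field) \<Rightarrow> nat set \<Rightarrow> 'a poly \<Rightarrow> 'a poly" where
  "epsI \<theta> I P = P - smult 2 (\<Sum>i\<in>I. smult (piC \<theta> P i) (Pj \<theta> i))"

definition eps :: "(nat \<Rightarrow> 'a::field) \<Rightarrow> nat \<Rightarrow> 'a poly \<Rightarrow> 'a poly" where
  "eps \<theta> i = epsI \<theta> {i}"

definition proj_eq :: "'a::field poly \<Rightarrow> 'a poly \<Rightarrow> bool" where
  "proj_eq P Q \<longleftrightarrow> (\<exists>c. c \<noteq> 0 \<and> P = smult c Q)"

definition GL_S :: "(nat \<Rightarrow> 'a::field) \<Rightarrow> ('a poly \<Rightarrow> 'a poly) \<Rightarrow> bool" where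
  "GL_S \<theta> M \<longleftrightarrow>
     (\<forall>P\<in>V5. \<forall>Q\<in>V5. M (P + Q) = M P + M Q) \<and>
     (\<forall>P\<in>V5. \<forall>c. M (smult c P) = smult c (M P)) \<and>
     bij_betw M V5 V5 \<and>
     M ` Scone \<theta> = Scone \<theta>"

end

theory Submission
  imports Defs
begin

lemma Pj_root:
  assumes "j \<in> {1..6}" "i \<noteq> j"
  shows "poly (Pj \<theta> i) (\<theta> j) = 0"
proof -
  have "j \<in> {1..6} - {i}" using assms by auto
  then show ?thesis unfolding Pj_def poly_prod
    by (intro prod_zero) auto
qed

lemma omega_nz:
  assumes "inj_on \<theta> {1..6::nat}" "i \<in> {1..6}"
  shows "omega \<theta> i \<noteq> (0::'a::field)"
  unfolding omega_def Pj_def poly_prod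
proof
  assume "(\<Prod>k\<in>{1..6} - {i}. poly [:- \<theta> k, 1:] (\<theta> i)) = 0"
  then obtain k where "k \<in> {1..6} - {i}" "poly [:- \<theta> k, 1:] (\<theta> i) = 0"
    by (metis (no_types, lifting) finite_Diff finite_atLeastAtMost prod_zero_iff)
  then have "k \<in> {1..6}" "k \<noteq> i" "\<theta> i = \<theta> k" by auto
  then show False using assms inj_onD[OF assms(1), of i k] by auto
qed

lemma piC_Pj:
  assumes "inj_on \<theta> {1..6::nat}" "i \<in> {1..6}" "j \<in> {1..6}"
  shows "piC \<theta> (Pj \<theta> i) j = (if i = j then 1 else (0::'a::field))"
  using Pj_root[of j i \<theta>] omega_nz[OF assms(1,3)] assms
  by (auto simp: piC_def omega_def)

lemma Pj_deg5:
  assumes "i \<in> {1..6::nat}"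
  shows "degree (Pj \<theta> i) = 5 \<and> coeff (Pj \<theta> i) 5 = (1::'a::field)"
proof -
  have c0: "card ({1..6::nat} - {i}) = card {1..6::nat} - 1"
    by (rule card_Diff_singleton[OF assms])
  have c: "card ({1..6::nat} - {i}) = 5" unfolding c0 by simp
  have "degree (Pj \<theta> i) = (\<Sum>k\<in>{1..6} - {i}. degree [:-\<theta> k, 1:])"
    unfolding Pj_def by (rule degree_prod_eq_sum_degree) simp
  also have "\<dots> = card ({1..6::nat}-{i})" by simp
  also note c
  finally have d: "degree (Pj \<theta> i) = 5" .
  have "lead_coeff (Pj \<theta> i) = 1" unfolding Pj_def lead_coeff_prod by simp
  with d show ?thesis by simp
qed

lemma piC_sum_smult:
  "piC \<theta> (\<Sum>j\<in>J. smult (c j) (Q j)) m = (\<Sum>j\<in>J. c j * piC \<theta> (Q j) m)"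
  by (simp add: piC_def poly_sum sum_divide_distrib)

lemma piC_comb:
  assumes "inj_on \<theta> {1..6::nat}" "m \<in> {1..6}"
  shows "piC \<theta> (\<Sum>j\<in>{1..6}. smult (c j) (Pj \<theta> j)) m = (c m :: 'a::field)"
proof -
  have "piC \<theta> (\<Sum>j\<in>{1..6}. smult (c j) (Pj \<theta> j)) m
     = (\<Sum>j\<in>{1..6}. c j * (if j = m then 1 else 0))"
    unfolding piC_sum_smult using assms by (intro sum.cong refl) (simp add: piC_Pj)
  also have "\<dots> = c m" using assms by (simp add: if_distrib sum.delta cong: if_cong)
  finally show ?thesis .
qed

lemma V5_sum: "finite J \<Longrightarrow> (\<And>j. j \<in> J \<Longrightarrow> degree (Q j) \<le> 5) \<Longrightarrow>
   degree (\<Sum>j\<in>J. smult (c j) (Q j)) \<le> 5"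
  by (rule degree_sum_le) (auto intro: order_trans[OF degree_smult_le])

lemma lagrange:
  assumes inj: "inj_on \<theta> {1..6::nat}" and deg: "degree P \<le> 5"
  shows "P = (\<Sum>j\<in>{1..6}. smult (piC \<theta> P j) (Pj \<theta> j :: 'a::field poly))"
proof (rule poly_eqI_degree[of "\<theta> ` {1..6}"])
  fix x assume "x \<in> \<theta> ` {1..6}"
  then obtain m where m: "m \<in> {1..6}" "x = \<theta> m" by auto
  have o: "omega \<theta> m \<noteq> 0" by (rule omega_nz[OF inj m(1)])
  have "poly P x = piC \<theta> P m * omega \<theta> m" using o m by (simp add: piC_def)
  also have "\<dots> = piC \<theta> (\<Sum>j\<in>{1..6}. smult (piC \<theta> P j) (Pj \<theta> j)) m * omega \<theta> m"
    unfolding piC_comb[OF inj m(1)] ..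
  also have "\<dots> = poly (\<Sum>j\<in>{1..6}. smult (piC \<theta> P j) (Pj \<theta> j)) x"
    using o m by (simp add: piC_def)
  finally show "poly P x = poly (\<Sum>j\<in>{1..6}. smult (piC \<theta> P j) (Pj \<theta> j)) x" .
next
  have "card (\<theta> ` {1..6}) = 6" using inj by (simp add: card_image)
  then show "degree P < card (\<theta> ` {1..6})" using deg by simp
  have "degree (\<Sum>j\<in>{1..6}. smult (piC \<theta> P j) (Pj \<theta> j)) \<le> 5"
    by (rule V5_sum) (auto simp: Pj_deg5)
  then show "degree (\<Sum>j\<in>{1..6}. smult (piC \<theta> P j) (Pj \<theta> j)) < card (\<theta> ` {1..6})"
    using \<open>card _ = 6\<close> by simp
qed

lemma M_zero:
  assumes "\<forall>P\<in>V5. \<forall>c. M (smult c P) = smult c (M P)"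
  shows "M 0 = (0::'a::field poly)"
proof -
  have "(0::'a poly) \<in> V5" by (simp add: V5_def)
  then have "M (smult 0 0) = smult 0 (M 0)" using assms by blast
  then show ?thesis by simp
qed

lemma M_sum:
  assumes add: "\<forall>P\<in>V5. \<forall>Q\<in>V5. M (P + Q) = M P + M Q"
    and sm: "\<forall>P\<in>V5. \<forall>c. M (smult c P) = smult c (M P)"
    and fin: "finite J" and QV: "\<And>j. j \<in> J \<Longrightarrow> degree (Q j) \<le> 5"
  shows "M (\<Sum>j\<in>J. smult (c j) (Q j)) = (\<Sum>j\<in>J. smult (c j) (M (Q j :: 'a::field poly)))"
  using fin QV
proof (induction J rule: finite_induct)
  case empty
  then show ?case using M_zero[OF sm] by simp
next
  case (insert x F)
  have d1: "smult (c x) (Q x) \<in> V5" using insert.prems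
    by (auto simp: V5_def intro: order_trans[OF degree_smult_le])
  have d2: "(\<Sum>j\<in>F. smult (c j) (Q j)) \<in> V5" unfolding V5_def
    using insert by (auto intro!: V5_sum)
  have "Q x \<in> V5" using insert.prems by (simp add: V5_def)
  then show ?case using insert add d1 d2 sm by simp
qed

lemma piC_smult: "piC \<theta> (smult c Q) j = c * piC \<theta> Q j"
  by (simp add: piC_def)
lemma piC_add: "piC \<theta> (P + Q) j = piC \<theta> P j + piC \<theta> Q j"
  by (simp add: piC_def add_divide_distrib)
lemma piC_diff: "piC \<theta> (P - Q) j = piC \<theta> P j - piC \<theta> Q j"
  by (simp add: piC_def diff_divide_distrib)
lemma piC_zero: "piC \<theta> 0 j = 0"
  by (simp add: piC_def)

lemma partial_frac:
  assumes inj: "inj_on \<theta> {1..6::nat}" and k: "k \<le> 4"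
  shows "(\<Sum>j\<in>{1..6}. \<theta> j ^ k / omega \<theta> j) = (0::'a::field)"
proof -
  have d: "degree (monom (1::'a) k) \<le> 5" using k by (simp add: degree_monom_eq)
  have "coeff (monom (1::'a) k) 5 = coeff (\<Sum>j\<in>{1..6}. smult (piC \<theta> (monom 1 k) j) (Pj \<theta> j)) 5"
    using lagrange[OF inj d] by simp
  also have "\<dots> = (\<Sum>j\<in>{1..6}. piC \<theta> (monom 1 k) j * coeff (Pj \<theta> j) 5)"
    by (simp add: coeff_sum)
  also have "\<dots> = (\<Sum>j\<in>{1..6}. \<theta> j ^ k / omega \<theta> j)"
    by (intro sum.cong refl) (simp add: Pj_deg5 piC_def poly_monom)
  finally show ?thesis using k by simp
qed

lemma signsum:
  assumes "finite A" "B \<subseteq> A"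
  shows "(\<Sum>j\<in>A. (if j \<in> B then -1 else 1) * f j) = (\<Sum>j\<in>A. f j) - 2 * (\<Sum>j\<in>B. (f j::'a::field))"
proof -
  have "(\<Sum>j\<in>A. (if j \<in> B then -1 else 1) * f j) = (\<Sum>j\<in>A. f j - 2 * (if j \<in> B then f j else 0))"
    by (intro sum.cong refl) auto
  also have "\<dots> = (\<Sum>j\<in>A. f j) - 2 * (\<Sum>j\<in>A. (if j \<in> B then f j else 0))"
    by (simp add: sum_subtractf sum_distrib_left)
  also have "(\<Sum>j\<in>A. (if j \<in> B then f j else 0)) = (\<Sum>j\<in>A \<inter> B. f j)"
    by (rule sum.inter_restrict[symmetric, OF assms(1)])
  also have "A \<inter> B = B" using assms by auto
  finally show ?thesis .
qed

lemma piC_epsI: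
  assumes inj: "inj_on \<theta> {1..6::nat}" "I \<subseteq> {1..6}" "a \<in> {1..6}"
  shows "piC \<theta> (epsI \<theta> I R) a = piC \<theta> R a - 2 * (if a \<in> I then piC \<theta> R a else (0::'a::field))"
proof -
  have "(\<Sum>m\<in>I. piC \<theta> R m * piC \<theta> (Pj \<theta> m) a) = (\<Sum>m\<in>I. if m = a then piC \<theta> R a else 0)"
    using assms by (intro sum.cong refl) (auto simp: piC_Pj)
  also have "\<dots> = (if a \<in> I then piC \<theta> R a else 0)"
    using assms(2) finite_subset[OF assms(2)] by (simp add: sum.delta')
  finally have e: "(\<Sum>m\<in>I. piC \<theta> R m * piC \<theta> (Pj \<theta> m) a) = (if a \<in> I then piC \<theta> R a else 0)" .
  show ?thesis unfolding epsI_def piC_diff piC_smult piC_sum_smult e ..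
qed

theorem mainTheorem9:
  fixes F :: "'a::field poly" and \<theta> :: "nat \<Rightarrow> 'a"
    and M :: "'a poly \<Rightarrow> 'a poly" and I :: "nat set" and \<sigma> :: "nat \<Rightarrow> nat"
  assumes alg_closed: "\<forall>p::'a poly. degree p \<ge> 1 \<longrightarrow> (\<exists>x. poly p x = 0)"
    and char_not_2: "(2::'a) \<noteq> 0"
    and degF: "degree F = 6"
    and roots: "bij_betw \<theta> {1..6} {x. poly F x = 0}"
    and A: "GL_S \<theta> M"
    and epsA: "I \<subseteq> {1..6}" "(epsI \<theta> I \<circ> M) ` Delta0 = Delta0"
    and sigma: "\<sigma> permutes {1..6}"
    "\<forall>i\<in>{1..6}. proj_eq (epsI \<theta> I (M [:- \<theta> i, 1:])) [:- \<theta> (\<sigma> i), 1:]"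
  shows "\<forall>i\<in>{1..6}. \<forall>P\<in>Scone \<theta>. proj_eq (M (eps \<theta> i P)) (eps \<theta> (\<sigma> i) (M P))"
proof -
  have inj: "inj_on \<theta> {1..6}" using roots by (simp add: bij_betw_def)
  have add: "\<forall>P\<in>V5. \<forall>Q\<in>V5. M (P + Q) = M P + M Q"
    and sm: "\<forall>P\<in>V5. \<forall>c. M (smult c P) = smult c (M P)"
    and bij: "bij_betw M V5 V5" and SS: "M ` Scone \<theta> = Scone \<theta>"
    using A by (auto simp: GL_S_def)
  define m where "m i j = piC \<theta> (M (Pj \<theta> j)) i" for i j
  have PjV: "Pj \<theta> j \<in> V5" if "j \<in> {1..6}" for j
    using Pj_deg5[OF that, of \<theta>] by (simp add: V5_def)
  have K1: "piC \<theta> (M Q) i = (\<Sum>j\<in>{1..6}. piC \<theta> Q j * m i j)" if "Q \<in> V5" for Q i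
  proof -
    have "M Q = M (\<Sum>j\<in>{1..6}. smult (piC \<theta> Q j) (Pj \<theta> j))"
      using lagrange[OF inj, of Q] that by (simp add: V5_def)
    also have "\<dots> = (\<Sum>j\<in>{1..6}. smult (piC \<theta> Q j) (M (Pj \<theta> j)))"
      by (rule M_sum[OF add sm]) (auto simp: Pj_deg5)
    finally show ?thesis by (simp add: piC_sum_smult m_def mult.commute)
  qed
  have surj: "\<exists>Q\<in>V5. M Q = R" if "R \<in> V5" for R
  proof -
    have "R \<in> M ` V5" using bij that by (simp add: bij_betw_def)
    then show ?thesis by blast
  qed
  have injM: "P = Q" if "P \<in> V5" "Q \<in> V5" "M P = M Q" for P Q
    using bij that by (auto simp: bij_betw_def inj_on_def)
  have MV: "M Q \<in> V5" if "Q \<in> V5" for Q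
    using bij that by (auto simp: bij_betw_def)
  have SM: "M P \<in> Scone \<theta>" if "P \<in> Scone \<theta>" for P
    using SS that by auto
  have M0: "M 0 = 0" by (rule M_zero[OF sm])
  have V0: "0 \<in> V5" by (simp add: V5_def)
  have onz: "omega \<theta> j \<noteq> 0" if "j \<in> {1..6}" for j using omega_nz[OF inj that] .

  define x where "x j = 1 / omega \<theta> j" for j
  have xnz: "x j \<noteq> 0" if "j \<in> {1..6}" for j using onz[OF that] by (simp add: x_def)
  have K2: "(\<Sum>i\<in>{1..6}. \<theta> i ^ k * omega \<theta> i *
      ((\<Sum>j\<in>{1..6}. m i j * x j) - 2 * (\<Sum>j\<in>B. m i j * x j))^2) = 0"
    if B: "B \<subseteq> {1..6}" and k: "k < 3" for B k
  proof -
    define s where "s j = (if j \<in> B then -1 else (1::'a))" for j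
    define R where "R = (\<Sum>j\<in>{1..6}. smult (s j * x j) (Pj \<theta> j))"
    have piR: "piC \<theta> R j = s j * x j" if "j \<in> {1..6}" for j
      unfolding R_def by (rule piC_comb[OF inj that])
    have RV: "R \<in> V5" unfolding R_def V5_def mem_Collect_eq by (rule V5_sum) (auto simp: Pj_deg5)
    have "piC \<theta> R 1 \<noteq> 0" using piR[of 1] xnz[of 1] by (simp add: s_def)
    then have Rnz: "R \<noteq> 0" by (auto simp: piC_zero)
    have "(\<Sum>j\<in>{1..6}. \<theta> j ^ k' * omega \<theta> j * (piC \<theta> R j)^2) = 0" if "k' < 3" for k'
    proof -
      have "(\<Sum>j\<in>{1..6}. \<theta> j ^ k' * omega \<theta> j * (piC \<theta> R j)^2)
          = (\<Sum>j\<in>{1..6}. \<theta> j ^ k' / omega \<theta> j)"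
      proof (intro sum.cong refl)
        fix j :: nat assume j: "j \<in> {1..6}"
        have "(s j)^2 = 1" by (simp add: s_def)
        then show "\<theta> j ^ k' * omega \<theta> j * (piC \<theta> R j)^2 = \<theta> j ^ k' / omega \<theta> j"
          using onz[OF j] by (simp add: piR[OF j] x_def power_mult_distrib power2_eq_square field_simps)
      qed
      also have "\<dots> = 0" by (rule partial_frac[OF inj]) (use that in simp)
      finally show ?thesis .
    qed
    then have "R \<in> Scone \<theta>" using RV Rnz by (simp add: Scone_def V5_def)
    then have "M R \<in> Scone \<theta>" by (rule SM)
    then have e: "(\<Sum>i\<in>{1..6}. \<theta> i ^ k * omega \<theta> i * (piC \<theta> (M R) i)^2) = 0"
      using k by (simp add: Scone_def)
    have "piC \<theta> (M R) i = (\<Sum>j\<in>{1..6}. m i j * x j) - 2 * (\<Sum>j\<in>B. m i j * x j)" for i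
    proof -
      have "piC \<theta> (M R) i = (\<Sum>j\<in>{1..6}. s j * (m i j * x j))"
        unfolding K1[OF RV] by (intro sum.cong refl) (simp add: piR)
      also have "\<dots> = (\<Sum>j\<in>{1..6}. m i j * x j) - 2 * (\<Sum>j\<in>B. m i j * x j)"
        unfolding s_def by (rule signsum[OF _ B]) simp
      finally show ?thesis .
    qed
    with e show ?thesis by simp
  qed
  have K3: "(\<Sum>i\<in>{1..6}. \<theta> i ^ k * omega \<theta> i * m i j * m i l) = 0"
    if j: "j \<in> {1..6}" and l: "l \<in> {1..6}" and jl: "j \<noteq> l" and k: "k < 3" for j l k
  proof -
    define v where "v i = (\<Sum>j\<in>{1..6}. m i j * x j)" for i
    define \<phi> where "\<phi> i = \<theta> i ^ k * omega \<theta> i" for i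
    define a where "a i = m i j * x j" for i
    define b where "b i = m i l * x l" for i
    have E0: "(\<Sum>i\<in>{1..6}. \<phi> i * (v i)^2) = 0"
      using K2[of "{}" k] k by (simp add: v_def \<phi>_def)
    have Ej: "(\<Sum>i\<in>{1..6}. \<phi> i * (v i - 2 * a i)^2) = 0"
      using K2[of "{j}" k] k j by (simp add: v_def \<phi>_def a_def)
    have El: "(\<Sum>i\<in>{1..6}. \<phi> i * (v i - 2 * b i)^2) = 0"
      using K2[of "{l}" k] k l by (simp add: v_def \<phi>_def b_def)
    have Ejl: "(\<Sum>i\<in>{1..6}. \<phi> i * (v i - 2 * (a i + b i))^2) = 0"
      using K2[of "{j,l}" k] k j l jl by (simp add: v_def \<phi>_def a_def b_def)
    have "(\<Sum>i\<in>{1..6}. \<phi> i * (8 * a i * b i)) =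
      (\<Sum>i\<in>{1..6}. \<phi> i * (v i)^2 - \<phi> i * (v i - 2 * a i)^2 - \<phi> i * (v i - 2 * b i)^2
          + \<phi> i * (v i - 2 * (a i + b i))^2)"
      by (intro sum.cong refl) (simp add: power2_eq_square algebra_simps)
    also have "\<dots> = 0"
      by (simp only: sum.distrib sum_subtractf E0 Ej El Ejl) simp
    finally have "(8 * x j * x l) * (\<Sum>i\<in>{1..6}. \<theta> i ^ k * omega \<theta> i * m i j * m i l) = 0"
      by (simp add: sum_distrib_left \<phi>_def a_def b_def mult_ac)
    moreover have "(8::'a) \<noteq> 0"
    proof -
      have "(8::'a) = 2 * 2 * 2" by simp
      moreover have "(2::'a) * 2 * 2 \<noteq> 0" using char_not_2 by (metis mult_eq_0_iff)
      ultimately show ?thesis by metis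
    qed
    ultimately show ?thesis using xnz[OF j] xnz[OF l] by simp
  qed
  have K4: "\<exists>b\<in>{1..6}. \<exists>c. c \<noteq> 0 \<and> M (Pj \<theta> b) = smult c (Pj \<theta> a)"
    if a: "a \<in> {1..6}" for a
  proof -
    define \<phi> where "\<phi> i = omega \<theta> i * (\<theta> i - \<theta> a)" for i
    have T0: "(\<Sum>i\<in>{1..6}. \<phi> i * m i j * m i l) = 0"
      if j: "j \<in> {1..6}" and l: "l \<in> {1..6}" and jl: "j \<noteq> l" for j l
    proof -
      have "(\<Sum>i\<in>{1..6}. \<phi> i * m i j * m i l) =
        (\<Sum>i\<in>{1..6}. \<theta> i ^ 1 * omega \<theta> i * m i j * m i l) -
        \<theta> a * (\<Sum>i\<in>{1..6}. \<theta> i ^ 0 * omega \<theta> i * m i j * m i l)"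
        by (simp add: sum_distrib_left sum_subtractf[symmetric] \<phi>_def algebra_simps)
      also have "\<dots> = 0" using K3[OF j l jl, of 1] K3[OF j l jl, of 0] by simp
      finally show ?thesis .
    qed
    have PaV: "Pj \<theta> a \<in> V5" by (rule PjV[OF a])
    obtain Q where QV: "Q \<in> V5" and MQ: "M Q = Pj \<theta> a" using surj[OF PaV] by blast
    have piMQ: "(\<Sum>j\<in>{1..6}. piC \<theta> Q j * m i j) = (if a = i then 1 else 0)"
      if i: "i \<in> {1..6}" for i
      using K1[OF QV, of i] piC_Pj[OF inj a i] MQ by simp
    have G: "piC \<theta> Q l * (\<Sum>i\<in>{1..6}. \<phi> i * m i l * m i l) = 0" if l: "l \<in> {1..6}" for l
    proof -
      have "(\<Sum>i\<in>{1..6}. \<phi> i * (\<Sum>j\<in>{1..6}. piC \<theta> Q j * m i j) * m i l) =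
        (\<Sum>i\<in>{1..6}. \<phi> i * (if a = i then 1 else 0) * m i l)"
      proof (intro sum.cong refl)
        fix i :: nat assume "i \<in> {1..6}"
        show "\<phi> i * (\<Sum>j\<in>{1..6}. piC \<theta> Q j * m i j) * m i l = \<phi> i * (if a = i then 1 else 0) * m i l"
          unfolding piMQ[OF \<open>i \<in> {1..6}\<close>] ..
      qed
      also have "\<dots> = (\<Sum>i\<in>{1..6}. if a = i then \<phi> a * m a l else 0)"
        by (intro sum.cong refl) auto
      also have "\<dots> = \<phi> a * m a l" using a by simp
      also have "\<dots> = 0" by (simp add: \<phi>_def)
      finally have z: "(\<Sum>i\<in>{1..6}. \<phi> i * (\<Sum>j\<in>{1..6}. piC \<theta> Q j * m i j) * m i l) = 0" .
      have "(\<Sum>i\<in>{1..6}. \<phi> i * (\<Sum>j\<in>{1..6}. piC \<theta> Q j * m i j) * m i l) =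
        (\<Sum>j\<in>{1..6}. piC \<theta> Q j * (\<Sum>i\<in>{1..6}. \<phi> i * m i j * m i l))"
        by (simp add: sum_distrib_left sum_distrib_right mult_ac) (rule sum.swap)
      also have "\<dots> = (\<Sum>j\<in>{1..6}. if j = l then piC \<theta> Q l * (\<Sum>i\<in>{1..6}. \<phi> i * m i l * m i l) else 0)"
        by (intro sum.cong refl) (metis T0 l mult_zero_right)
      also have "\<dots> = piC \<theta> Q l * (\<Sum>i\<in>{1..6}. \<phi> i * m i l * m i l)" using l by simp
      finally show ?thesis using z by simp
    qed
    have "Q \<noteq> 0"
    proof
      assume "Q = 0"
      then have "Pj \<theta> a = 0" using MQ M0 by simp
      then show False using piC_Pj[OF inj a a] by (simp add: piC_zero)
    qed
    have "\<exists>b\<in>{1..6}. piC \<theta> Q b \<noteq> 0"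
    proof (rule ccontr)
      assume "\<not> ?thesis"
      then have "(\<Sum>j\<in>{1..6}. smult (piC \<theta> Q j) (Pj \<theta> j)) = 0" by simp
      then show False using lagrange[OF inj, of Q] QV \<open>Q \<noteq> 0\<close> by (simp add: V5_def)
    qed
    then obtain b where b: "b \<in> {1..6}" "piC \<theta> Q b \<noteq> 0" by blast
    have Gb: "(\<Sum>i\<in>{1..6}. \<phi> i * m i b * m i b) = 0" using G[OF b(1)] b(2) by simp
    define w where "w i = \<phi> i * m i b" for i
    have wl: "(\<Sum>i\<in>{1..6}. w i * m i l) = 0" if l: "l \<in> {1..6}" for l
      using Gb T0[OF b(1) l] unfolding w_def by (cases "b = l") auto
    have w0: "w i0 = 0" if i0: "i0 \<in> {1..6}" for i0
    proof -
      obtain R where RV: "R \<in> V5" and MR: "M R = Pj \<theta> i0" using surj[OF PjV[OF i0]] by blast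
      have "(\<Sum>i\<in>{1..6}. w i * piC \<theta> (M R) i) = (\<Sum>i\<in>{1..6}. w i * (if i0 = i then 1 else 0))"
        by (intro sum.cong refl) (simp add: MR piC_Pj[OF inj i0])
      also have "\<dots> = (\<Sum>i\<in>{1..6}. if i0 = i then w i0 else 0)"
        by (intro sum.cong refl) auto
      also have "\<dots> = w i0" using i0 by simp
      finally have e1: "(\<Sum>i\<in>{1..6}. w i * piC \<theta> (M R) i) = w i0" .
      have "(\<Sum>i\<in>{1..6}. w i * piC \<theta> (M R) i) = (\<Sum>l\<in>{1..6}. piC \<theta> R l * (\<Sum>i\<in>{1..6}. w i * m i l))"
        by (simp add: K1[OF RV] sum_distrib_left sum_distrib_right mult_ac) (rule sum.swap)
      also have "\<dots> = 0" by (rule sum.neutral) (metis wl mult_zero_right)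
      finally show ?thesis using e1 by simp
    qed
    have mz: "m i b = 0" if i: "i \<in> {1..6}" "i \<noteq> a" for i
    proof -
      have "\<theta> i \<noteq> \<theta> a" using inj_onD[OF inj _ i(1) a] i(2) by auto
      then have "\<phi> i \<noteq> 0" using onz[OF i(1)] by (simp add: \<phi>_def)
      then show ?thesis using w0[OF i(1)] by (simp add: w_def)
    qed
    have "M (Pj \<theta> b) = (\<Sum>i\<in>{1..6}. smult (m i b) (Pj \<theta> i))"
      using lagrange[OF inj, of "M (Pj \<theta> b)"] MV[OF PjV[OF b(1)]] by (simp add: V5_def m_def)
    also have "\<dots> = (\<Sum>i\<in>{1..6}. if i = a then smult (m a b) (Pj \<theta> a) else 0)"
      by (intro sum.cong refl) (auto simp: mz)
    also have "\<dots> = smult (m a b) (Pj \<theta> a)" using a by simp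
    finally have eq: "M (Pj \<theta> b) = smult (m a b) (Pj \<theta> a)" .
    have "m a b \<noteq> 0"
    proof
      assume "m a b = 0"
      then have "M (Pj \<theta> b) = M 0" using eq M0 by simp
      then have "Pj \<theta> b = 0" using injM[OF PjV[OF b(1)] V0] by simp
      then show False using piC_Pj[OF inj b(1) b(1)] by (simp add: piC_zero)
    qed
    then show ?thesis using eq b(1) by blast
  qed
  have K5: "\<exists>a\<in>{1..6}. \<exists>c. c \<noteq> 0 \<and> M (Pj \<theta> b) = smult c (Pj \<theta> a)"
    if b: "b \<in> {1..6}" for b
  proof -
    define g where "g a = (SOME b. b \<in> {1..6} \<and> (\<exists>c. c \<noteq> 0 \<and> M (Pj \<theta> b) = smult c (Pj \<theta> a)))" for a
    have gP: "g a \<in> {1..6} \<and> (\<exists>c. c \<noteq> 0 \<and> M (Pj \<theta> (g a)) = smult c (Pj \<theta> a))"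
      if "a \<in> {1..6}" for a
      unfolding g_def by (rule someI_ex) (use K4[OF that] in blast)
    have "inj_on g {1..6}"
    proof (rule inj_onI)
      fix a a' assume a: "a \<in> {1..6}" and a': "a' \<in> {1..6}" and e: "g a = g a'"
      obtain c where c: "c \<noteq> 0" "M (Pj \<theta> (g a)) = smult c (Pj \<theta> a)" using gP[OF a] by blast
      obtain c' where c': "c' \<noteq> 0" "M (Pj \<theta> (g a')) = smult c' (Pj \<theta> a')" using gP[OF a'] by blast
      have "smult c (Pj \<theta> a) = smult c' (Pj \<theta> a')" using c c' e by simp
      then have "piC \<theta> (smult c (Pj \<theta> a)) a = piC \<theta> (smult c' (Pj \<theta> a')) a" by simp
      then have "c = c' * (if a' = a then 1 else 0)"
        by (simp add: piC_smult piC_Pj[OF inj a a] piC_Pj[OF inj a' a])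
      then show "a = a'" using c(1) by (auto split: if_splits)
    qed
    moreover have "g ` {1..6} \<subseteq> {1..6}" using gP by auto
    ultimately have "g ` {1..6} = {1..6}" by (intro endo_inj_surj) auto
    then have "b \<in> g ` {1..6}" using b by simp
    then obtain a where a: "a \<in> {1..6}" "b = g a" by blast
    then show ?thesis using gP[OF a(1)] by blast
  qed
  show ?thesis
  proof (intro ballI)
    fix i P assume i: "i \<in> {1..6::nat}" and P: "P \<in> Scone \<theta>"
    have PV: "P \<in> V5" using P by (simp add: Scone_def V5_def)
    obtain a c where a: "a \<in> {1..6}" and c: "c \<noteq> 0" "M (Pj \<theta> i) = smult c (Pj \<theta> a)"
      using K5[OF i] by blast
    have mcol: "m a j = (if j = i then c else 0)" if j: "j \<in> {1..6}" for j
    proof (cases "j = i")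
      case True
      then show ?thesis using c by (simp add: m_def piC_smult piC_Pj[OF inj a a])
    next
      case False
      obtain a' c' where a': "a' \<in> {1..6}" and c': "c' \<noteq> 0" "M (Pj \<theta> j) = smult c' (Pj \<theta> a')"
        using K5[OF j] by blast
      have "a' \<noteq> a"
      proof
        assume "a' = a"
        have "M (smult c (Pj \<theta> j)) = smult (c * c') (Pj \<theta> a)"
          using sm PjV[OF j] c'(2) \<open>a' = a\<close> by simp
        moreover have "M (smult c' (Pj \<theta> i)) = smult (c * c') (Pj \<theta> a)"
          using sm PjV[OF i] c(2) by (simp add: mult.commute)
        ultimately have "M (smult c (Pj \<theta> j)) = M (smult c' (Pj \<theta> i))" by simp
        moreover have "smult c (Pj \<theta> j) \<in> V5" "smult c' (Pj \<theta> i) \<in> V5"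
          using PjV[OF j] PjV[OF i] by (auto simp: V5_def)
        ultimately have "smult c (Pj \<theta> j) = smult c' (Pj \<theta> i)" using injM by blast
        then have "piC \<theta> (smult c (Pj \<theta> j)) i = piC \<theta> (smult c' (Pj \<theta> i)) i" by simp
        then have "c' = 0" using False by (simp add: piC_smult piC_Pj[OF inj j i] piC_Pj[OF inj i i])
        then show False using c' by simp
      qed
      then show ?thesis using False c'(2) by (simp add: m_def piC_smult piC_Pj[OF inj a' a])
    qed
    have piMa: "piC \<theta> (M Q) a = piC \<theta> Q i * c" if QV: "Q \<in> V5" for Q
    proof -
      have "piC \<theta> (M Q) a = (\<Sum>j\<in>{1..6}. if j = i then piC \<theta> Q i * c else 0)"
        unfolding K1[OF QV] by (intro sum.cong refl) (simp add: mcol)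
      also have "\<dots> = piC \<theta> Q i * c" using i by simp
      finally show ?thesis .
    qed
    have si: "\<sigma> i \<in> {1..6}" using permutes_in_image[OF sigma(1)] i by blast
    obtain k where k: "k \<noteq> 0" "epsI \<theta> I (M [:- \<theta> i, 1:]) = smult k [:- \<theta> (\<sigma> i), 1:]"
    proof -
      have "proj_eq (epsI \<theta> I (M [:- \<theta> i, 1:])) [:- \<theta> (\<sigma> i), 1:]" using sigma(2) i by blast
      then show ?thesis using that unfolding proj_eq_def by blast
    qed
    have LV: "[:- \<theta> i, 1:] \<in> V5" by (simp add: V5_def)
    have "piC \<theta> [:- \<theta> i, 1:] i = 0" by (simp add: piC_def)
    then have z: "piC \<theta> (M [:- \<theta> i, 1:]) a = 0" using piMa[OF LV] by simp
    have "piC \<theta> (smult k [:- \<theta> (\<sigma> i), 1:]) a = 0"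
      using piC_epsI[OF inj epsA(1) a, of "M [:- \<theta> i, 1:]"] z k(2) by simp
    then have "\<theta> a = \<theta> (\<sigma> i)" using k(1) onz[OF a] by (simp add: piC_def)
    then have asi: "a = \<sigma> i" using inj_onD[OF inj _ a si] by simp
    have Pi2: "smult (-2 * piC \<theta> P i) (Pj \<theta> i) \<in> V5" using PjV[OF i] by (auto simp: V5_def)
    have "eps \<theta> i P = P + smult (-2 * piC \<theta> P i) (Pj \<theta> i)"
      by (simp add: eps_def epsI_def)
    moreover have "M (P + smult (-2 * piC \<theta> P i) (Pj \<theta> i)) = M P + M (smult (-2 * piC \<theta> P i) (Pj \<theta> i))"
      using add PV Pi2 by blast
    moreover have "M (smult (-2 * piC \<theta> P i) (Pj \<theta> i)) = smult (-2 * piC \<theta> P i) (M (Pj \<theta> i))"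
      using sm PjV[OF i] by blast
    ultimately have "M (eps \<theta> i P) = M P + smult (-2 * piC \<theta> P i) (M (Pj \<theta> i))"
      by simp
    also have "\<dots> = M P + smult (-2 * piC \<theta> P i * c) (Pj \<theta> a)" using c(2) by simp
    also have "\<dots> = eps \<theta> a (M P)"
      by (simp add: eps_def epsI_def piMa[OF PV] mult_ac)
    finally have "M (eps \<theta> i P) = eps \<theta> (\<sigma> i) (M P)" using asi by simp
    then show "proj_eq (M (eps \<theta> i P)) (eps \<theta> (\<sigma> i) (M P))"
      unfolding proj_eq_def by (intro exI[of _ 1]) simp
  qed
qed
end
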